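(* (Curry-Feys Standardization) For all terms $e, e'$: $e \to\!\!\to e'$ if and only if there exists a standard reduction sequence $e_1, \dots, e_n \in \mathcal{R}$ with $e = e_1$ and $e' = e_n$.
   Context: Terms: $e ::= x \mid \lambda x.e \mid e\,e$ (modulo $\alpha$-equivalence, Barendregt's variable convention). Values: $v ::= \lambda x.e$. A context is a term with one hole $[\,]$; $C[e]$ is plugging, $C_1[C_2]$ composition. Answer contexts: $A ::= [\,] \mid A[\lambda x.A]\,e$. Outer partial answer contexts: $A^{\uparrow} ::= [\,] \mid A[A^{\uparrow}]\,e$. Inner partial answer contexts: $A^{\downarrow} ::= [\,] \mid A[\lambda x.A^{\downarrow}]$. Evaluation contexts: $E ::= [\,] \mid E\,e \mid A[E] \mid A^{\uparrow}[A[\lambda x.A^{\downarrow}[E[x]]]\,E]$, where in the last production $A^{\uparrow}[A^{\downarrow}]$ must be an answer context. Axiom $\beta_{need}$: $A^{\uparrow}[A_1[\lambda x.A^{\downarrow}[E[x]]]\,A_2[v]] \;\beta_{need}\; A^{\uparrow}[A_1[A_2[(A^{\downarrow}[E[x]])\{x:=v\}]]]$ provided $A^{\uparrow}[A^{\downarrow}]$ is an answer context ($\{x:=v\}$ capture-avoiding substitution). $\to$ is the compatible closure of $\beta_{need}$ (closure under contexts $C ::= [\,] \mid \lambda x.C \mid C\,e \mid e\,C$), $\to\!\!\to$ its reflexive–transitive closure. Standard reduction: $E[e]\mapsto E[e']$ for every evaluation context $E$ whenever $e\;\beta_{need}\;e'$. The set $\mathcal{R}$ of standard reduction sequences is the least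 set of finite nonempty sequences of terms such that: (1) for every variable $x$, the one-element sequence $x$ is in $\mathcal{R}$; (2) if $e_1,\dots,e_m\in\mathcal{R}$ then $\lambda x.e_1,\dots,\lambda x.e_m\in\mathcal{R}$; (3) if $e_0\mapsto e_1$ and $e_1,\dots,e_m\in\mathcal{R}$ then $e_0,e_1,\dots,e_m\in\mathcal{R}$; (4) if $e_1,\dots,e_m\in\mathcal{R}$ and $e_1',\dots,e_n'\in\mathcal{R}$ then $(e_1\,e_1'),\dots,(e_m\,e_1'),(e_m\,e_2'),\dots,(e_m\,e_n')\in\mathcal{R}$. *)

theory Defs
  imports Main
begin

text \<open>Lambda terms modulo alpha-equivalence, represented with de Bruijn indices.
  A variable occurrence Var i refers to the i-th enclosing binder (counted from 0);
  indices exceeding the number of enclosing binders denote free variables.\<close>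

datatype dB = Var nat | Lam dB | App dB dB

primrec liftn :: "nat \<Rightarrow> dB \<Rightarrow> nat \<Rightarrow> dB" where
  "liftn n (Var i) k = (if i < k then Var i else Var (i + n))"
| "liftn n (Lam t) k = Lam (liftn n t (k + 1))"
| "liftn n (App s t) k = App (liftn n s k) (liftn n t k)"

primrec subst :: "dB \<Rightarrow> dB \<Rightarrow> nat \<Rightarrow> dB" where
  "subst (Var i) s k = (if k < i then Var (i - 1) else if i = k then s else Var i)"
| "subst (Lam t) s k = Lam (subst t (liftn 1 s 0) (k + 1))"
| "subst (App t u) s k = App (subst t s k) (subst u s k)"

definition is_value :: "dB \<Rightarrow> bool" where
  "is_value t \<longleftrightarrow> (\<exists>b. t = Lam b)"

text \<open>One-hole contexts; plugging is literal (may capture).\<close>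
datatype ctx = Hole | CLam ctx | CAppL ctx dB | CAppR dB ctx

primrec plug :: "ctx \<Rightarrow> dB \<Rightarrow> dB" where
  "plug Hole e = e"
| "plug (CLam C) e = Lam (plug C e)"
| "plug (CAppL C t) e = App (plug C e) t"
| "plug (CAppR t C) e = App t (plug C e)"

primrec comp :: "ctx \<Rightarrow> ctx \<Rightarrow> ctx" where
  "comp Hole D = D"
| "comp (CLam C) D = CLam (comp C D)"
| "comp (CAppL C t) D = CAppL (comp C D) t"
| "comp (CAppR t C) D = CAppR t (comp C D)"

primrec binders :: "ctx \<Rightarrow> nat" where
  "binders Hole = 0"
| "binders (CLam C) = Suc (binders C)"
| "binders (CAppL C t) = binders C"
| "binders (CAppR t C) = binders C"

primrec cliftn :: "nat \<Rightarrow> ctx \<Rightarrow> nat \<Rightarrow> ctx" where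
  "cliftn n Hole k = Hole"
| "cliftn n (CLam C) k = CLam (cliftn n C (k + 1))"
| "cliftn n (CAppL C t) k = CAppL (cliftn n C k) (liftn n t k)"
| "cliftn n (CAppR t C) k = CAppR (liftn n t k) (cliftn n C k)"

inductive ans :: "ctx \<Rightarrow> bool" where
  ans_hole: "ans Hole"
| ans_app: "ans A1 \<Longrightarrow> ans A2 \<Longrightarrow> ans (CAppL (comp A1 (CLam A2)) e)"

inductive outer :: "ctx \<Rightarrow> bool" where
  outer_hole: "outer Hole"
| outer_app: "ans A \<Longrightarrow> outer Au \<Longrightarrow> outer (CAppL (comp A Au) e)"

inductive inner :: "ctx \<Rightarrow> bool" where
  inner_hole: "inner Hole"
| inner_lam: "ans A \<Longrightarrow> inner Ad \<Longrightarrow> inner (comp A (CLam Ad))"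

text \<open>The term A1[\<lambda>x. Ad[E[x]]] where x is the variable bound by the displayed \<lambda>
  (in de Bruijn form: index binders Ad + binders E at the hole of E).\<close>
definition need_body :: "ctx \<Rightarrow> ctx \<Rightarrow> dB" where
  "need_body Ad E = plug Ad (plug E (Var (binders Ad + binders E)))"

inductive eval_ctx :: "ctx \<Rightarrow> bool" where
  ev_hole: "eval_ctx Hole"
| ev_app: "eval_ctx E \<Longrightarrow> eval_ctx (CAppL E e)"
| ev_ans: "ans A \<Longrightarrow> eval_ctx E \<Longrightarrow> eval_ctx (comp A E)"
| ev_need: "outer Au \<Longrightarrow> ans A \<Longrightarrow> inner Ad \<Longrightarrow> eval_ctx E1 \<Longrightarrow> eval_ctx E2 \<Longrightarrow>
     ans (comp Au Ad) \<Longrightarrow>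
     eval_ctx (comp Au (CAppR (plug A (Lam (need_body Ad E1))) E2))"

text \<open>Axiom beta_need:
  Au[A1[\<lambda>x.Ad[E[x]]] A2[v]]  beta_need  Au[A1[A2[(Ad[E[x]]){x:=v}]]]
  provided Au[Ad] is an answer context.  In de Bruijn form, moving A2[v] under the
  binders of A1 requires lifting A2 and v by binders A1, and the body
  Ad[E[x]] must be lifted over the binders of A2 before x is substituted.\<close>
inductive beta_need :: "dB \<Rightarrow> dB \<Rightarrow> bool" where
  beta_needI: "outer Au \<Longrightarrow> ans A1 \<Longrightarrow> inner Ad \<Longrightarrow> eval_ctx E \<Longrightarrow> ans A2 \<Longrightarrow>
     ans (comp Au Ad) \<Longrightarrow> is_value v \<Longrightarrow>
     beta_need
       (plug Au (App (plug A1 (Lam (need_body Ad E))) (plug A2 v)))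
       (plug Au (plug A1 (plug (cliftn (binders A1) A2 0)
          (subst (liftn (binders A2) (need_body Ad E) 1)
                 (liftn (binders A1) v (binders A2)) 0))))"

inductive red :: "dB \<Rightarrow> dB \<Rightarrow> bool" where
  red_beta: "beta_need e e' \<Longrightarrow> red e e'"
| red_lam: "red e e' \<Longrightarrow> red (Lam e) (Lam e')"
| red_appL: "red e e' \<Longrightarrow> red (App e u) (App e' u)"
| red_appR: "red e e' \<Longrightarrow> red (App u e) (App u e')"

abbreviation red_star :: "dB \<Rightarrow> dB \<Rightarrow> bool" where
  "red_star \<equiv> red\<^sup>*\<^sup>*"

inductive std_step :: "dB \<Rightarrow> dB \<Rightarrow> bool" where
  std_stepI: "eval_ctx E \<Longrightarrow> beta_need e e' \<Longrightarrow> std_step (plug E e) (plug E e')"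

inductive_set std_seqs :: "dB list set" where
  sr_var: "[Var x] \<in> std_seqs"
| sr_lam: "es \<in> std_seqs \<Longrightarrow> map Lam es \<in> std_seqs"
| sr_step: "std_step e0 (hd es) \<Longrightarrow> es \<in> std_seqs \<Longrightarrow> e0 # es \<in> std_seqs"
| sr_app: "es \<in> std_seqs \<Longrightarrow> fs \<in> std_seqs \<Longrightarrow>
     map (\<lambda>e. App e (hd fs)) es @ map (App (last es)) (tl fs) \<in> std_seqs"

end

theory Submission
  imports Defs
begin


lemma liftn_0[simp]: "liftn 0 t k = t"
  by (induction t arbitrary: k) auto

lemma liftn_liftn_add:
  "i \<le> j \<Longrightarrow> j \<le> i + m \<Longrightarrow> liftn n (liftn m t i) j = liftn (m + n) t i"
  by (induction t arbitrary: i j) auto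

lemma liftn_liftn_comm:
  "i \<le> j \<Longrightarrow> liftn n (liftn m t i) (j + m) = liftn m (liftn n t j) i"
proof (induction t arbitrary: i j)
  case (Lam t)
  then show ?case using Lam.IH[of "Suc i" "Suc j"] by simp
qed auto

lemma lift_subst_ge:
  "j \<le> i \<Longrightarrow> liftn n (subst t s j) i = subst (liftn n t (i+1)) (liftn n s i) j"
proof (induction t arbitrary: i j s)
  case (Lam t)
  then show ?case using liftn_liftn_comm[of 0 i n 1 s] Lam.IH[of "Suc j" "Suc i" "liftn 1 s 0"] by simp
qed auto

lemma lift_subst_le:
  "i \<le> j \<Longrightarrow> subst (liftn n t i) (liftn n s i) (j+n) = liftn n (subst t s j) i"
proof (induction t arbitrary: i j s)
  case (Lam t)
  then show ?case using liftn_liftn_comm[of 0 i n 1 s] Lam.IH[of "Suc i" "Suc j" "liftn 1 s 0"] by simp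
qed auto

lemma subst_liftn1[simp]: "subst (liftn (Suc 0) t k) s k = t"
  by (induction t arbitrary: k s) auto

lemma subst_liftn1'[simp]: "subst (liftn 1 t k) s k = t"
  by simp

lemma subst_subst:
  "i \<le> j \<Longrightarrow> subst (subst t u i) v j = subst (subst t (liftn 1 v i) (j+1)) (subst u v j) i"
proof (induction t arbitrary: i j u v)
  case (Var x)
  then show ?case by auto
next
  case (Lam t)
  have "subst (liftn 1 u 0) (liftn 1 v 0) (Suc j) = liftn 1 (subst u v j) 0"
    using lift_subst_le[of 0 j 1 u v] by simp
  moreover have "liftn 1 (liftn 1 v i) 0 = liftn 1 (liftn 1 v 0) (Suc i)"
    using liftn_liftn_comm[of 0 i 1 1 v] by simp
  ultimately show ?case using Lam by simp
qed auto



lemma plug_comp[simp]: "plug (comp C D) t = plug C (plug D t)"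
  by (induction C) auto

lemma comp_Hole[simp]: "comp C Hole = C"
  by (induction C) auto

lemma comp_assoc[simp]: "comp (comp C D) F = comp C (comp D F)"
  by (induction C) auto

lemma binders_comp[simp]: "binders (comp C D) = binders C + binders D"
  by (induction C) auto

lemma binders_cliftn[simp]: "binders (cliftn n C k) = binders C"
  by (induction C arbitrary: k) auto

lemma cliftn_comp: "cliftn n (comp C D) k = comp (cliftn n C k) (cliftn n D (k + binders C))"
  by (induction C arbitrary: k) auto

lemma liftn_plug: "liftn n (plug C t) k = plug (cliftn n C k) (liftn n t (k + binders C))"
  by (induction C arbitrary: k) auto

primrec csubst :: "ctx \<Rightarrow> dB \<Rightarrow> nat \<Rightarrow> ctx" where
  "csubst Hole s k = Hole"
| "csubst (CLam C) s k = CLam (csubst C (liftn 1 s 0) (k + 1))"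
| "csubst (CAppL C t) s k = CAppL (csubst C s k) (subst t s k)"
| "csubst (CAppR t C) s k = CAppR (subst t s k) (csubst C s k)"

lemma binders_csubst[simp]: "binders (csubst C s k) = binders C"
  by (induction C arbitrary: k s) auto

lemma liftn_1_liftn: "liftn n (liftn (Suc 0) s 0) 0 = liftn (Suc n) s 0"
  using liftn_liftn_add[of 0 0 1 n s] by simp

lemma csubst_comp: "csubst (comp C D) s k = comp (csubst C s k) (csubst D (liftn (binders C) s 0) (k + binders C))"
proof (induction C arbitrary: k s)
  case (CLam C)
  then show ?case by (simp add: liftn_1_liftn)
qed auto

lemma subst_plug: "subst (plug C t) s k = plug (csubst C s k) (subst t (liftn (binders C) s 0) (k + binders C))"
proof (induction C arbitrary: k s)
  case (CLam C)
  then show ?case by (simp add: liftn_1_liftn)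
qed auto

lemma liftn_need_body: "0 < K \<Longrightarrow>
  liftn n (need_body Ad E) K = need_body (cliftn n Ad K) (cliftn n E (K + binders Ad))"
  by (simp add: need_body_def liftn_plug add.assoc)

lemma subst_need_body: "0 < K \<Longrightarrow>
  subst (need_body Ad E) s K = need_body (csubst Ad s K) (csubst E (liftn (binders Ad) s 0) (K + binders Ad))"
  by (simp add: need_body_def subst_plug add.assoc)

inductive ctxrel :: "(dB \<Rightarrow> dB \<Rightarrow> bool) \<Rightarrow> ctx \<Rightarrow> ctx \<Rightarrow> bool" for R where
  cr_hole: "ctxrel R Hole Hole"
| cr_lam: "ctxrel R C D \<Longrightarrow> ctxrel R (CLam C) (CLam D)"
| cr_appL: "ctxrel R C D \<Longrightarrow> R t u \<Longrightarrow> ctxrel R (CAppL C t) (CAppL D u)"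
| cr_appR: "R t u \<Longrightarrow> ctxrel R C D \<Longrightarrow> ctxrel R (CAppR t C) (CAppR u D)"

abbreviation samesk :: "ctx \<Rightarrow> ctx \<Rightarrow> bool" where
  "samesk \<equiv> ctxrel (\<lambda>_ _. True)"

lemma ctxrel_binders: "ctxrel R C D \<Longrightarrow> binders C = binders D"
  by (induction rule: ctxrel.induct) auto

lemma ctxrel_comp: "ctxrel R C D \<Longrightarrow> ctxrel R C' D' \<Longrightarrow> ctxrel R (comp C C') (comp D D')"
  by (induction rule: ctxrel.induct) (auto intro: ctxrel.intros)

inductive_cases cr_HoleE: "ctxrel R X Hole"
inductive_cases cr_LamE: "ctxrel R X (CLam D)"
inductive_cases cr_AppLE: "ctxrel R X (CAppL D u)"
inductive_cases cr_AppRE: "ctxrel R X (CAppR u D)"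

lemma ctxrel_comp_inv: "ctxrel R X (comp A B) \<Longrightarrow>
   \<exists>A' B'. X = comp A' B' \<and> ctxrel R A' A \<and> ctxrel R B' B"
proof (induction A arbitrary: X)
  case Hole
  then show ?case by (intro exI[of _ Hole] exI[of _ X]) (auto intro: ctxrel.intros)
next
  case (CLam A)
  from CLam.prems obtain X' where "X = CLam X'" "ctxrel R X' (comp A B)" by (auto elim: cr_LamE)
  with CLam.IH show ?case by (metis comp.simps(2) ctxrel.cr_lam)
next
  case (CAppL A t)
  from CAppL.prems obtain X' t' where "X = CAppL X' t'" "ctxrel R X' (comp A B)" "R t' t"
    by (auto elim: cr_AppLE)
  with CAppL.IH show ?case by (metis comp.simps(3) ctxrel.cr_appL)
next
  case (CAppR t A)
  from CAppR.prems obtain X' t' where "X = CAppR t' X'" "ctxrel R X' (comp A B)" "R t' t"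
    by (auto elim: cr_AppRE)
  with CAppR.IH show ?case by (metis comp.simps(4) ctxrel.cr_appR)
qed

lemma ctxrel_samesk: "ctxrel R C D \<Longrightarrow> samesk C D"
  by (induction rule: ctxrel.induct) (auto intro: ctxrel.intros)

lemma samesk_sym: "samesk C D \<Longrightarrow> samesk D C"
  by (induction rule: ctxrel.induct) (auto intro: ctxrel.intros)

lemma samesk_refl: "samesk C C"
  by (induction C) (auto intro: ctxrel.intros)

lemma ans_samesk: "ans A \<Longrightarrow> samesk X A \<Longrightarrow> ans X"
proof (induction arbitrary: X rule: ans.induct)
  case ans_hole
  then show ?case by (auto elim: cr_HoleE cr_LamE cr_AppLE cr_AppRE intro: ans.intros)
next
  case (ans_app A1 A2 e)
  from ans_app.prems obtain Y t where X: "X = CAppL Y t" "samesk Y (comp A1 (CLam A2))"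
    by (auto elim: cr_HoleE cr_LamE cr_AppLE cr_AppRE)
  then obtain Y1 Y2 where "Y = comp Y1 Y2" "samesk Y1 A1" "samesk Y2 (CLam A2)"
    using ctxrel_comp_inv by blast
  moreover from this obtain Z where "Y2 = CLam Z" "samesk Z A2" by (auto elim: cr_HoleE cr_LamE cr_AppLE cr_AppRE)
  ultimately show ?case using ans_app X by (auto intro: ans.intros)
qed

lemma outer_samesk: "outer A \<Longrightarrow> samesk X A \<Longrightarrow> outer X"
proof (induction arbitrary: X rule: outer.induct)
  case outer_hole
  then show ?case by (auto elim: cr_HoleE cr_LamE cr_AppLE cr_AppRE intro: outer.intros)
next
  case (outer_app A Au e)
  from outer_app.prems obtain Y t where X: "X = CAppL Y t" "samesk Y (comp A Au)"
    by (auto elim: cr_HoleE cr_LamE cr_AppLE cr_AppRE)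
  then obtain Y1 Y2 where "Y = comp Y1 Y2" "samesk Y1 A" "samesk Y2 Au"
    using ctxrel_comp_inv by blast
  then show ?case using outer_app X ans_samesk by (auto intro: outer.intros)
qed

lemma inner_samesk: "inner A \<Longrightarrow> samesk X A \<Longrightarrow> inner X"
proof (induction arbitrary: X rule: inner.induct)
  case inner_hole
  then show ?case by (auto elim: cr_HoleE cr_LamE cr_AppLE cr_AppRE intro: inner.intros)
next
  case (inner_lam A Ad)
  then obtain Y1 Y2 where "X = comp Y1 Y2" "samesk Y1 A" "samesk Y2 (CLam Ad)"
    using ctxrel_comp_inv by blast
  moreover from this obtain Z where "Y2 = CLam Z" "samesk Z Ad" by (auto elim: cr_HoleE cr_LamE cr_AppLE cr_AppRE)
  ultimately show ?case using inner_lam ans_samesk by (auto intro: inner.intros)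
qed

lemma samesk_cliftn: "samesk (cliftn n C k) C"
  by (induction C arbitrary: k) (auto intro: ctxrel.intros)

lemma samesk_csubst: "samesk (csubst C s k) C"
  by (induction C arbitrary: k s) (auto intro: ctxrel.intros)

lemma eval_ctx_cliftn: "eval_ctx E \<Longrightarrow> eval_ctx (cliftn n E k)"
proof (induction arbitrary: k rule: eval_ctx.induct)
  case ev_hole
  then show ?case by (auto intro: eval_ctx.intros)
next
  case (ev_app E e)
  then show ?case by (auto intro: eval_ctx.intros)
next
  case (ev_ans A E)
  then show ?case
    by (auto simp: cliftn_comp intro!: eval_ctx.ev_ans intro: ans_samesk samesk_cliftn)
next
  case (ev_need Au A Ad E1 E2)
  let ?K = "k + binders Au"
  have "cliftn n (comp Au (CAppR (plug A (Lam (need_body Ad E1))) E2)) k =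
    comp (cliftn n Au k) (CAppR (plug (cliftn n A ?K) (Lam (need_body (cliftn n Ad (?K + binders A + 1))
       (cliftn n E1 (?K + binders A + 1 + binders Ad))))) (cliftn n E2 ?K))"
    by (simp add: cliftn_comp liftn_plug liftn_need_body)
  moreover have "ans (comp (cliftn n Au k) (cliftn n Ad (?K + binders A + 1)))"
    by (rule ans_samesk[OF ev_need.hyps(6)]) (intro ctxrel_comp samesk_cliftn)
  ultimately show ?case using ev_need
    by (auto intro!: eval_ctx.ev_need intro: outer_samesk ans_samesk inner_samesk samesk_cliftn)
qed

lemma eval_ctx_csubst: "eval_ctx E \<Longrightarrow> eval_ctx (csubst E s k)"
proof (induction arbitrary: k s rule: eval_ctx.induct)
  case ev_hole
  then show ?case by (auto intro: eval_ctx.intros)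
next
  case (ev_app E e)
  then show ?case by (auto intro: eval_ctx.intros)
next
  case (ev_ans A E)
  then show ?case
    by (auto simp: csubst_comp intro!: eval_ctx.ev_ans intro: ans_samesk samesk_csubst)
next
  case (ev_need Au A Ad E1 E2)
  let ?K = "k + binders Au"
  let ?s = "liftn (binders Au) s 0"
  let ?s2 = "liftn (binders A) ?s 0"
  let ?s3 = "liftn 1 ?s2 0"
  have "csubst (comp Au (CAppR (plug A (Lam (need_body Ad E1))) E2)) s k =
    comp (csubst Au s k) (CAppR (plug (csubst A ?s ?K) (Lam (need_body (csubst Ad ?s3 (?K + binders A + 1))
       (csubst E1 (liftn (binders Ad) ?s3 0) (?K + binders A + 1 + binders Ad))))) (csubst E2 ?s ?K))"
    by (simp add: csubst_comp subst_plug subst_need_body)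
  moreover have "ans (comp (csubst Au s k) (csubst Ad ?s3 (?K + binders A + 1)))"
    by (rule ans_samesk[OF ev_need.hyps(6)]) (intro ctxrel_comp samesk_csubst)
  ultimately show ?case using ev_need
    by (auto intro!: eval_ctx.ev_need intro: outer_samesk ans_samesk inner_samesk samesk_csubst)
qed



lemma cliftn_cliftn_comm:
  "i \<le> j \<Longrightarrow> cliftn n (cliftn m C i) (j + m) = cliftn m (cliftn n C j) i"
proof (induction C arbitrary: i j)
  case (CLam C)
  then show ?case using CLam.IH[of "Suc i" "Suc j"] by simp
qed (auto simp: liftn_liftn_comm)

lemma csubst_cliftn:
  "i \<le> j \<Longrightarrow> csubst (cliftn n C i) (liftn n s i) (j+n) = cliftn n (csubst C s j) i"
proof (induction C arbitrary: i j s)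
  case (CLam C)
  then show ?case using liftn_liftn_comm[of 0 i n 1 s] CLam.IH[of "Suc i" "Suc j" "liftn 1 s 0"] by simp
qed (auto simp: lift_subst_le)

lemma value_liftn: "is_value v \<Longrightarrow> is_value (liftn n v k)"
  by (auto simp: is_value_def)

lemma value_subst: "is_value v \<Longrightarrow> is_value (subst v s k)"
  by (auto simp: is_value_def)

lemma beta_need_liftn: "beta_need e e' \<Longrightarrow> beta_need (liftn n e k) (liftn n e' k)"
proof (induction rule: beta_need.induct)
  case (beta_needI Au A1 Ad E A2 v)
  define K where "K = k + binders Au"
  define a1 where "a1 = binders A1"
  define a2 where "a2 = binders A2"
  define Au' where "Au' = cliftn n Au k"
  define A1' where "A1' = cliftn n A1 K"
  define A2' where "A2' = cliftn n A2 K"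
  define Ad' where "Ad' = cliftn n Ad (K + a1 + 1)"
  define E' where "E' = cliftn n E (K + a1 + 1 + binders Ad)"
  define v' where "v' = liftn n v (K + a2)"
  have B: "liftn n (need_body Ad E) (K + a1 + 1) = need_body Ad' E'"
    by (simp add: liftn_need_body Ad'_def E'_def)
  have lhs: "liftn n (plug Au (App (plug A1 (Lam (need_body Ad E))) (plug A2 v))) k =
     plug Au' (App (plug A1' (Lam (need_body Ad' E'))) (plug A2' v'))"
    using B by (simp add: liftn_plug K_def Au'_def A1'_def A2'_def v'_def a1_def a2_def add.assoc)
  have c1: "cliftn n (cliftn a1 A2 0) (K + a1) = cliftn a1 A2' 0"
    using cliftn_cliftn_comm[of 0 K n a1 A2] by (simp add: A2'_def)
  have c2: "liftn n (subst (liftn a2 (need_body Ad E) 1) (liftn a1 v a2) 0) (K + a1 + a2) =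
      subst (liftn a2 (need_body Ad' E') 1) (liftn a1 v' a2) 0"
  proof -
    have "liftn n (subst (liftn a2 (need_body Ad E) 1) (liftn a1 v a2) 0) (K + a1 + a2) =
       subst (liftn n (liftn a2 (need_body Ad E) 1) (K + a1 + a2 + 1)) (liftn n (liftn a1 v a2) (K + a1 + a2)) 0"
      by (rule lift_subst_ge) simp
    moreover have "liftn n (liftn a2 (need_body Ad E) 1) (K + a1 + a2 + 1) = liftn a2 (need_body Ad' E') 1"
      using liftn_liftn_comm[of 1 "K + a1 + 1" n a2 "need_body Ad E"] B by (simp add: add.commute add.left_commute)
    moreover have "liftn n (liftn a1 v a2) (K + a1 + a2) = liftn a1 v' a2"
      using liftn_liftn_comm[of a2 "K + a2" n a1 v] by (simp add: v'_def add.commute add.left_commute)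
    ultimately show ?thesis by simp
  qed
  have rhs: "liftn n (plug Au (plug A1 (plug (cliftn (binders A1) A2 0)
          (subst (liftn (binders A2) (need_body Ad E) 1)
                 (liftn (binders A1) v (binders A2)) 0)))) k =
     plug Au' (plug A1' (plug (cliftn (binders A1') A2' 0)
          (subst (liftn (binders A2') (need_body Ad' E') 1)
                 (liftn (binders A1') v' (binders A2')) 0)))"
    using c1 c2 by (simp add: liftn_plug K_def Au'_def A1'_def A2'_def a1_def a2_def add.assoc)
  have "beta_need (plug Au' (App (plug A1' (Lam (need_body Ad' E'))) (plug A2' v')))
     (plug Au' (plug A1' (plug (cliftn (binders A1') A2' 0)
          (subst (liftn (binders A2') (need_body Ad' E') 1)
                 (liftn (binders A1') v' (binders A2')) 0))))"
  proof (rule beta_need.beta_needI)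
    show "outer Au'" unfolding Au'_def by (rule outer_samesk[OF beta_needI.hyps(1) samesk_cliftn])
    show "ans A1'" unfolding A1'_def by (rule ans_samesk[OF beta_needI.hyps(2) samesk_cliftn])
    show "inner Ad'" unfolding Ad'_def by (rule inner_samesk[OF beta_needI.hyps(3) samesk_cliftn])
    show "eval_ctx E'" unfolding E'_def by (rule eval_ctx_cliftn[OF beta_needI.hyps(4)])
    show "ans A2'" unfolding A2'_def by (rule ans_samesk[OF beta_needI.hyps(5) samesk_cliftn])
    show "ans (comp Au' Ad')" unfolding Au'_def Ad'_def
      by (rule ans_samesk[OF beta_needI.hyps(6)]) (intro ctxrel_comp samesk_cliftn)
    show "is_value v'" unfolding v'_def by (rule value_liftn[OF beta_needI.hyps(7)])
  qed
  then show ?case using lhs rhs by simp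
qed

lemma beta_need_subst: "beta_need e e' \<Longrightarrow> beta_need (subst e s k) (subst e' s k)"
proof (induction rule: beta_need.induct)
  case (beta_needI Au A1 Ad E A2 v)
  define K where "K = k + binders Au"
  define a1 where "a1 = binders A1"
  define a2 where "a2 = binders A2"
  define sK where "sK = liftn (binders Au) s 0"
  define s1 where "s1 = liftn (Suc 0) (liftn a1 sK 0) 0"
  define Au' where "Au' = csubst Au s k"
  define A1' where "A1' = csubst A1 sK K"
  define A2' where "A2' = csubst A2 sK K"
  define Ad' where "Ad' = csubst Ad s1 (K + a1 + 1)"
  define E' where "E' = csubst E (liftn (binders Ad) s1 0) (K + a1 + 1 + binders Ad)"
  define v' where "v' = subst v (liftn a2 sK 0) (K + a2)"
  have B: "subst (need_body Ad E) s1 (K + a1 + 1) = need_body Ad' E'"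
    by (simp add: subst_need_body Ad'_def E'_def)
  have lhs: "subst (plug Au (App (plug A1 (Lam (need_body Ad E))) (plug A2 v))) s k =
     plug Au' (App (plug A1' (Lam (need_body Ad' E'))) (plug A2' v'))"
    using B by (simp add: subst_plug K_def Au'_def A1'_def A2'_def v'_def a1_def a2_def sK_def s1_def add.assoc)
  have c1: "csubst (cliftn a1 A2 0) (liftn a1 sK 0) (K + a1) = cliftn a1 A2' 0"
    using csubst_cliftn[of 0 K a1 A2 sK] by (simp add: A2'_def)
  have c2: "subst (subst (liftn a2 (need_body Ad E) 1) (liftn a1 v a2) 0) (liftn a2 (liftn a1 sK 0) 0) (K + a1 + a2) =
      subst (liftn a2 (need_body Ad' E') 1) (liftn a1 v' a2) 0"
  proof -
    define sL where "sL = liftn a2 (liftn a1 sK 0) 0"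
    have sL: "sL = liftn (a1 + a2) sK 0" unfolding sL_def by (rule liftn_liftn_add) auto
    have "subst (subst (liftn a2 (need_body Ad E) 1) (liftn a1 v a2) 0) sL (K + a1 + a2) =
       subst (subst (liftn a2 (need_body Ad E) 1) (liftn 1 sL 0) (K + a1 + a2 + 1)) (subst (liftn a1 v a2) sL (K + a1 + a2)) 0"
      by (rule subst_subst) simp
    moreover have "liftn 1 sL 0 = liftn a2 s1 1"
    proof -
      have "liftn 1 sL 0 = liftn (a1 + a2 + 1) sK 0" unfolding sL by (rule liftn_liftn_add) auto
      moreover have "s1 = liftn (a1 + 1) sK 0" unfolding s1_def using liftn_liftn_add[of 0 0 a1 1 sK] by simp
      moreover have "liftn a2 (liftn (a1 + 1) sK 0) 1 = liftn (a1 + 1 + a2) sK 0" by (rule liftn_liftn_add) auto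
      ultimately show ?thesis by (simp add: add.commute add.left_commute)
    qed
    moreover have "subst (liftn a2 (need_body Ad E) 1) (liftn a2 s1 1) (K + a1 + a2 + 1) = liftn a2 (need_body Ad' E') 1"
      using lift_subst_le[of 1 "K + a1 + 1" a2 "need_body Ad E" s1] B by (simp add: add.commute add.left_commute)
    moreover have "subst (liftn a1 v a2) sL (K + a1 + a2) = liftn a1 v' a2"
    proof -
      have "liftn a1 (liftn a2 sK 0) a2 = liftn (a2 + a1) sK 0" by (rule liftn_liftn_add) auto
      then have "sL = liftn a1 (liftn a2 sK 0) a2" using sL by (simp add: add.commute)
      then show ?thesis using lift_subst_le[of a2 "K + a2" a1 v "liftn a2 sK 0"]
        by (simp add: v'_def add.commute add.left_commute)
    qed
    ultimately show ?thesis unfolding sL_def by simp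
  qed
  have rhs: "subst (plug Au (plug A1 (plug (cliftn (binders A1) A2 0)
          (subst (liftn (binders A2) (need_body Ad E) 1)
                 (liftn (binders A1) v (binders A2)) 0)))) s k =
     plug Au' (plug A1' (plug (cliftn (binders A1') A2' 0)
          (subst (liftn (binders A2') (need_body Ad' E') 1)
                 (liftn (binders A1') v' (binders A2')) 0)))"
    using c1 c2 by (simp add: subst_plug K_def Au'_def A1'_def A2'_def a1_def a2_def sK_def add.assoc)
  have "beta_need (plug Au' (App (plug A1' (Lam (need_body Ad' E'))) (plug A2' v')))
     (plug Au' (plug A1' (plug (cliftn (binders A1') A2' 0)
          (subst (liftn (binders A2') (need_body Ad' E') 1)
                 (liftn (binders A1') v' (binders A2')) 0))))"
  proof (rule beta_need.beta_needI)
    show "outer Au'" unfolding Au'_def by (rule outer_samesk[OF beta_needI.hyps(1) samesk_csubst])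
    show "ans A1'" unfolding A1'_def by (rule ans_samesk[OF beta_needI.hyps(2) samesk_csubst])
    show "inner Ad'" unfolding Ad'_def by (rule inner_samesk[OF beta_needI.hyps(3) samesk_csubst])
    show "eval_ctx E'" unfolding E'_def by (rule eval_ctx_csubst[OF beta_needI.hyps(4)])
    show "ans A2'" unfolding A2'_def by (rule ans_samesk[OF beta_needI.hyps(5) samesk_csubst])
    show "ans (comp Au' Ad')" unfolding Au'_def Ad'_def
      by (rule ans_samesk[OF beta_needI.hyps(6)]) (intro ctxrel_comp samesk_csubst)
    show "is_value v'" unfolding v'_def by (rule value_subst[OF beta_needI.hyps(7)])
  qed
  then show ?case using lhs rhs by simp
qed



inductive P :: "dB \<Rightarrow> dB \<Rightarrow> bool" where
  P_var: "P (Var i) (Var i)"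
| P_lam: "P a b \<Longrightarrow> P (Lam a) (Lam b)"
| P_app: "P a b \<Longrightarrow> P c d \<Longrightarrow> P (App a c) (App b d)"
| P_top: "beta_need e e2 \<Longrightarrow> P e2 e' \<Longrightarrow> P e e'"

lemma P_refl: "P t t"
  by (induction t) (simp_all add: P_var P_lam P_app)

lemma P_liftn: "P e e' \<Longrightarrow> P (liftn n e k) (liftn n e' k)"
proof (induction arbitrary: k rule: P.induct)
  case (P_top e e2 e')
  then show ?case using beta_need_liftn P.P_top by blast
qed (simp_all add: P_var P_lam P_app)

lemma P_subst: "P e e' \<Longrightarrow> P s s' \<Longrightarrow> P (subst e s k) (subst e' s' k)"
proof (induction arbitrary: s s' k rule: P.induct)
  case (P_var i)
  then show ?case by (simp add: P_var P_refl)
next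
  case (P_lam a b)
  then show ?case by (simp add: P.P_lam P_liftn)
next
  case (P_app a b c d)
  then show ?case by (simp add: P.P_app)
next
  case (P_top e e2 e')
  then show ?case using beta_need_subst P.P_top by blast
qed

abbreviation Pc :: "ctx \<Rightarrow> ctx \<Rightarrow> bool" where "Pc \<equiv> ctxrel P"

lemma Pc_plug: "Pc C0 C \<Longrightarrow> P t0 t \<Longrightarrow> P (plug C0 t0) (plug C t)"
  by (induction rule: ctxrel.induct) (simp_all add: P.P_lam P.P_app)

lemma Pc_cliftn: "Pc C0 C \<Longrightarrow> Pc (cliftn n C0 k) (cliftn n C k)"
  by (induction arbitrary: k rule: ctxrel.induct) (simp_all add: ctxrel.intros P_liftn)

lemma P_invVar: "P e t \<Longrightarrow> t = Var i \<Longrightarrow> beta_need\<^sup>*\<^sup>* e (Var i)"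
proof (induction rule: P.induct)
  case (P_top e e2 e')
  then show ?case by (meson converse_rtranclp_into_rtranclp)
qed auto

lemma P_invLam: "P e t \<Longrightarrow> t = Lam b \<Longrightarrow> \<exists>a. beta_need\<^sup>*\<^sup>* e (Lam a) \<and> P a b"
proof (induction rule: P.induct)
  case (P_top e e2 e')
  then show ?case by (meson converse_rtranclp_into_rtranclp)
qed auto

lemma P_invApp: "P e t \<Longrightarrow> t = App b d \<Longrightarrow> \<exists>a c. beta_need\<^sup>*\<^sup>* e (App a c) \<and> P a b \<and> P c d"
proof (induction rule: P.induct)
  case (P_top e e2 e')
  then show ?case by (meson converse_rtranclp_into_rtranclp)
qed auto

lemma red_P: "red e e' \<Longrightarrow> P e e'"
  by (induction rule: red.induct) (auto intro: P.P_top P_refl P.P_lam P.P_app)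

section \<open>Evaluation contexts and standard steps\<close>

lemma eval_comp: "eval_ctx F \<Longrightarrow> eval_ctx E \<Longrightarrow> eval_ctx (comp F E)"
proof (induction rule: eval_ctx.induct)
  case (ev_need Au A Ad E1 E2)
  then show ?case using eval_ctx.ev_need[of Au A Ad E1 "comp E2 E"] by simp
qed (auto intro: eval_ctx.intros)

lemma ans_eval: "ans A \<Longrightarrow> eval_ctx A"
  using eval_ctx.ev_ans[of A Hole] eval_ctx.ev_hole by simp

lemma outer_eval: "outer A \<Longrightarrow> eval_ctx A"
  by (induction rule: outer.induct) (auto intro: eval_ctx.intros)

abbreviation stds where "stds \<equiv> std_step\<^sup>*\<^sup>*"

lemma std_ctx: "eval_ctx F \<Longrightarrow> std_step x y \<Longrightarrow> std_step (plug F x) (plug F y)"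
proof -
  assume F: "eval_ctx F" and xy: "std_step x y"
  from xy obtain E e e' where "x = plug E e" "y = plug E e'" "eval_ctx E" "beta_need e e'"
    by (cases rule: std_step.cases) auto
  then show ?thesis using std_step.std_stepI[of "comp F E" e e'] eval_comp[OF F] by simp
qed

lemma stds_ctx: "stds x y \<Longrightarrow> eval_ctx F \<Longrightarrow> stds (plug F x) (plug F y)"
  by (induction rule: rtranclp_induct) (auto intro: rtranclp.rtrancl_into_rtrancl std_ctx)

lemma beta_std: "beta_need x y \<Longrightarrow> std_step x y"
  using std_step.std_stepI[of Hole x y] eval_ctx.ev_hole by simp

lemma betas_stds: "beta_need\<^sup>*\<^sup>* x y \<Longrightarrow> stds x y"
  by (induction rule: rtranclp_induct) (auto intro: rtranclp.rtrancl_into_rtrancl beta_std)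

section \<open>Answer insertion\<close>

lemma comp_split: "comp C D = comp A1 (CLam A2) \<Longrightarrow>
  (\<exists>C''. C = comp A1 (CLam C'') \<and> A2 = comp C'' D) \<or> (\<exists>D'. A1 = comp C D' \<and> D = comp D' (CLam A2))"
proof (induction C arbitrary: A1)
  case Hole
  then show ?case by auto
next
  case (CLam C)
  show ?case
  proof (cases A1)
    case Hole
    then show ?thesis using CLam.prems by (intro disjI1 exI[of _ C]) auto
  next
    case (CLam A1')
    then show ?thesis using CLam.prems CLam.IH[of A1'] by auto
  qed (use CLam.prems in auto)
next
  case (CAppL C t)
  show ?case
  proof (cases A1)
    case (CAppL A1' t')
    then show ?thesis using CAppL.prems CAppL.IH[of A1'] by auto
  qed (use CAppL.prems in auto)
next
  case (CAppR t C)
  show ?case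
  proof (cases A1)
    case (CAppR t' A1')
    then show ?thesis using CAppR.prems CAppR.IH[of A1'] by auto
  qed (use CAppR.prems in auto)
qed

lemma ans_comp: "ans X \<Longrightarrow> ans D \<Longrightarrow> ans (comp X D)"
proof (induction rule: ans.induct)
  case (ans_app A1 A2 e)
  then show ?case using ans.ans_app[of A1 "comp A2 D" e] by simp
qed simp

lemma ans_insert: "ans Z \<Longrightarrow> Z = comp C D \<Longrightarrow> ans X \<Longrightarrow> ans (comp C (comp X D))"
proof (induction arbitrary: C D rule: ans.induct)
  case ans_hole
  then show ?case by (cases C) auto
next
  case (ans_app A1 A2 e)
  show ?case
  proof (cases C)
    case Hole
    have "D = CAppL (comp A1 (CLam A2)) e" using ans_app.prems Hole by simp
    then have "ans D" using ans_app.hyps ans.ans_app by blast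
    then show ?thesis using ans_app.prems Hole ans_comp by simp
  next
    case (CAppL C' e')
    with ans_app.prems have eq: "comp C' D = comp A1 (CLam A2)" and ee: "e' = e" by auto
    from comp_split[OF eq] show ?thesis
    proof
      assume "\<exists>C''. C' = comp A1 (CLam C'') \<and> A2 = comp C'' D"
      then obtain C'' where "C' = comp A1 (CLam C'')" "A2 = comp C'' D" by blast
      then show ?thesis using ans_app.IH(2)[of C'' D] ans_app.prems ans_app.hyps CAppL ee
        ans.ans_app[of A1 "comp C'' (comp X D)" e] by simp
    next
      assume "\<exists>D'. A1 = comp C' D' \<and> D = comp D' (CLam A2)"
      then obtain D' where "A1 = comp C' D'" "D = comp D' (CLam A2)" by blast
      then show ?thesis using ans_app.IH(1)[of C' D'] ans_app.prems ans_app.hyps CAppL ee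
        ans.ans_app[of "comp C' (comp X D')" A2 e] by simp
    qed
  qed (use ans_app.prems in auto)
qed

lemma ans_need: "ans (comp Au Ad) \<Longrightarrow> ans A1 \<Longrightarrow> ans (comp Au (CAppL (comp A1 (CLam Ad)) c))"
  using ans_insert[of "comp Au Ad" Au Ad "CAppL (comp A1 (CLam Hole)) c"]
    ans.ans_app[of A1 Hole c] ans.ans_hole by simp



lemma Pc_ans: "Pc A0 A \<Longrightarrow> ans A \<Longrightarrow> ans A0"
  using ans_samesk ctxrel_samesk by blast
lemma Pc_outer: "Pc A0 A \<Longrightarrow> outer A \<Longrightarrow> outer A0"
  using outer_samesk ctxrel_samesk by blast
lemma Pc_inner: "Pc A0 A \<Longrightarrow> inner A \<Longrightarrow> inner A0"
  using inner_samesk ctxrel_samesk by blast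

lemma L_ans: "ans A \<Longrightarrow> P e (plug A s) \<Longrightarrow> \<exists>A0 s0. stds e (plug A0 s0) \<and> Pc A0 A \<and> P s0 s"
proof (induction arbitrary: e s rule: ans.induct)
  case ans_hole
  then show ?case by (intro exI[of _ Hole] exI[of _ e]) (auto intro: ctxrel.intros)
next
  case (ans_app A1 A2 c)
  from ans_app.prems have "P e (App (plug A1 (Lam (plug A2 s))) c)" by simp
  then obtain a c0 where e1: "beta_need\<^sup>*\<^sup>* e (App a c0)" and a: "P a (plug A1 (Lam (plug A2 s)))"
    and c0: "P c0 c" using P_invApp by blast
  from ans_app.IH(1)[OF a] obtain A10 h where a1: "stds a (plug A10 h)" and A10: "Pc A10 A1"
    and h: "P h (Lam (plug A2 s))" by blast
  have ansA10: "ans A10" using Pc_ans[OF A10 ans_app.hyps(1)] .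
  from P_invLam[OF h refl] obtain u where h1: "beta_need\<^sup>*\<^sup>* h (Lam u)" and u: "P u (plug A2 s)" by blast
  from ans_app.IH(2)[OF u] obtain A20 s0 where u1: "stds u (plug A20 s0)" and A20: "Pc A20 A2"
    and s0: "P s0 s" by blast
  have "stds e (App a c0)" using betas_stds[OF e1] .
  also have "stds (App a c0) (App (plug A10 h) c0)"
    using stds_ctx[OF a1, of "CAppL Hole c0"] by (simp add: eval_ctx.intros)
  also have "stds (App (plug A10 h) c0) (App (plug A10 (Lam u)) c0)"
    using stds_ctx[OF betas_stds[OF h1], of "CAppL A10 c0"] ansA10
    by (simp add: eval_ctx.ev_app ans_eval)
  also have "stds (App (plug A10 (Lam u)) c0) (App (plug A10 (Lam (plug A20 s0))) c0)"
  proof -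
    have "ans (CAppL (comp A10 (CLam Hole)) c0)" using ansA10 ans.ans_app ans.ans_hole by blast
    then show ?thesis using stds_ctx[OF u1, of "CAppL (comp A10 (CLam Hole)) c0"] ans_eval by simp
  qed
  finally show ?case using A10 A20 c0 s0
    by (intro exI[of _ "CAppL (comp A10 (CLam A20)) c0"] exI[of _ s0])
       (auto intro!: ctxrel.intros ctxrel_comp)
qed

definition LE :: "ctx \<Rightarrow> bool" where
  "LE E \<longleftrightarrow> (\<forall>e t. P e (plug E t) \<longrightarrow>
     (\<exists>E0 t0. stds e (plug E0 t0) \<and> eval_ctx E0 \<and> Pc E0 E \<and> P t0 t))"

lemma ND:
  assumes "outer Au" "ans A" "inner Ad" "ans (comp Au Ad)" "LE E1"
    and Pe: "P e (plug Au (App (plug A (Lam (need_body Ad E1))) g))"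
  shows "\<exists>Au0 A0 Ad0 E10 g0. stds e (plug Au0 (App (plug A0 (Lam (need_body Ad0 E10))) g0)) \<and>
     Pc Au0 Au \<and> Pc A0 A \<and> Pc Ad0 Ad \<and> Pc E10 E1 \<and> eval_ctx E10 \<and> P g0 g"
proof -
  define n where "n = binders Ad + binders E1"
  define Q where "Q = comp Au (CAppL (comp A (CLam Ad)) g)"
  have ansQ: "ans Q" unfolding Q_def using ans_need assms by blast
  have "P e (plug Q (plug E1 (Var n)))" using Pe by (simp add: Q_def need_body_def n_def)
  from L_ans[OF ansQ this] obtain Q0 s0 where e1: "stds e (plug Q0 s0)" and Q0: "Pc Q0 Q"
    and s0: "P s0 (plug E1 (Var n))" by blast
  have ansQ0: "ans Q0" using Pc_ans[OF Q0 ansQ] .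
  from \<open>LE E1\<close> s0 obtain E10 u where s1: "stds s0 (plug E10 u)" and evE10: "eval_ctx E10"
    and E10: "Pc E10 E1" and u: "P u (Var n)" unfolding LE_def by blast
  have "stds e (plug Q0 (plug E10 u))"
    using e1 stds_ctx[OF s1 ans_eval[OF ansQ0]] by simp
  also have "stds (plug Q0 (plug E10 u)) (plug Q0 (plug E10 (Var n)))"
    using stds_ctx[OF betas_stds[OF P_invVar[OF u refl]], of "comp Q0 E10"]
      eval_ctx.ev_ans[OF ansQ0 evE10] by simp
  finally have e2: "stds e (plug Q0 (plug E10 (Var n)))" .
  from Q0 obtain Au0 X where Q0eq: "Q0 = comp Au0 X" and Au0: "Pc Au0 Au"
    and X: "Pc X (CAppL (comp A (CLam Ad)) g)"
    unfolding Q_def using ctxrel_comp_inv by blast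
  from X obtain Y g0 where Xeq: "X = CAppL Y g0" and Y: "Pc Y (comp A (CLam Ad))" and g0: "P g0 g"
    by (auto elim: cr_AppLE)
  from Y obtain A0 Z where Yeq: "Y = comp A0 Z" and A0: "Pc A0 A" and Z: "Pc Z (CLam Ad)"
    using ctxrel_comp_inv by blast
  from Z obtain Ad0 where Zeq: "Z = CLam Ad0" and Ad0: "Pc Ad0 Ad" by (auto elim: cr_LamE)
  have "n = binders Ad0 + binders E10" using Ad0 E10 ctxrel_binders n_def by metis
  then have "plug Q0 (plug E10 (Var n)) = plug Au0 (App (plug A0 (Lam (need_body Ad0 E10))) g0)"
    by (simp add: Q0eq Xeq Yeq Zeq need_body_def)
  then show ?thesis using e2 Au0 A0 Ad0 E10 evE10 g0 by metis
qed

lemma Pc_need_body: "Pc Ad0 Ad \<Longrightarrow> Pc E0 E \<Longrightarrow> P (need_body Ad0 E0) (need_body Ad E)"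
proof -
  assume a: "Pc Ad0 Ad" "Pc E0 E"
  then have "binders Ad0 + binders E0 = binders Ad + binders E" using ctxrel_binders by metis
  then show ?thesis unfolding need_body_def using a by (simp add: Pc_plug P_refl)
qed

lemma eval_need_ctx:
  assumes "Pc Au0 Au" "Pc A0 A" "Pc Ad0 Ad" "outer Au" "ans A" "inner Ad" "ans (comp Au Ad)"
    "eval_ctx E10" "eval_ctx E20"
  shows "eval_ctx (comp Au0 (CAppR (plug A0 (Lam (need_body Ad0 E10))) E20))"
proof (rule eval_ctx.ev_need)
  show "outer Au0" using Pc_outer assms by blast
  show "ans A0" using Pc_ans assms by blast
  show "inner Ad0" using Pc_inner assms by blast
  show "ans (comp Au0 Ad0)" using Pc_ans[OF ctxrel_comp[OF assms(1,3)] assms(7)] .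
qed (use assms in auto)

lemma L_E_aux: "eval_ctx E \<Longrightarrow> LE E"
proof (induction rule: eval_ctx.induct)
  case ev_hole
  then show ?case unfolding LE_def
    by (auto intro!: exI[of _ Hole] intro: ctxrel.intros eval_ctx.intros)
next
  case (ev_app E c)
  show ?case unfolding LE_def
  proof (intro allI impI)
    fix e t assume "P e (plug (CAppL E c) t)"
    then obtain a c0 where e1: "beta_need\<^sup>*\<^sup>* e (App a c0)" and a: "P a (plug E t)" and c0: "P c0 c"
      using P_invApp by fastforce
    from ev_app.IH a obtain E0 t0 where a1: "stds a (plug E0 t0)" "eval_ctx E0" "Pc E0 E" "P t0 t"
      unfolding LE_def by blast
    have "stds e (App (plug E0 t0) c0)"
      using betas_stds[OF e1] stds_ctx[OF a1(1), of "CAppL Hole c0"] by (simp add: eval_ctx.intros)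
    then show "\<exists>E0 t0. stds e (plug E0 t0) \<and> eval_ctx E0 \<and> Pc E0 (CAppL E c) \<and> P t0 t"
      using a1 c0 by (intro exI[of _ "CAppL E0 c0"] exI[of _ t0]) (auto intro: ctxrel.intros eval_ctx.intros)
  qed
next
  case (ev_ans A E)
  show ?case unfolding LE_def
  proof (intro allI impI)
    fix e t assume "P e (plug (comp A E) t)"
    then have "P e (plug A (plug E t))" by simp
    from L_ans[OF ev_ans.hyps(1) this] obtain A0 s0 where e1: "stds e (plug A0 s0)" "Pc A0 A"
      "P s0 (plug E t)" by blast
    have ansA0: "ans A0" using Pc_ans e1(2) ev_ans.hyps(1) by blast
    from ev_ans.IH e1(3) obtain E0 t0 where s1: "stds s0 (plug E0 t0)" "eval_ctx E0" "Pc E0 E" "P t0 t"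
      unfolding LE_def by blast
    have "stds e (plug (comp A0 E0) t0)"
      using e1(1) stds_ctx[OF s1(1) ans_eval[OF ansA0]] by simp
    then show "\<exists>E0 t0. stds e (plug E0 t0) \<and> eval_ctx E0 \<and> Pc E0 (comp A E) \<and> P t0 t"
      using s1 e1 ansA0 by (intro exI[of _ "comp A0 E0"] exI[of _ t0])
        (auto intro: ctxrel_comp eval_ctx.ev_ans)
  qed
next
  case (ev_need Au A Ad E1 E2)
  show ?case unfolding LE_def
  proof (intro allI impI)
    fix e t assume "P e (plug (comp Au (CAppR (plug A (Lam (need_body Ad E1))) E2)) t)"
    then have "P e (plug Au (App (plug A (Lam (need_body Ad E1))) (plug E2 t)))" by simp
    from ND[OF ev_need.hyps(1,2,3,6) ev_need.IH(1) this] obtain Au0 A0 Ad0 E10 g0 where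
      e1: "stds e (plug Au0 (App (plug A0 (Lam (need_body Ad0 E10))) g0))"
      and rel: "Pc Au0 Au" "Pc A0 A" "Pc Ad0 Ad" "Pc E10 E1" "eval_ctx E10" and g0: "P g0 (plug E2 t)"
      by blast
    from ev_need.IH(2) g0 obtain E20 t0 where g1: "stds g0 (plug E20 t0)" "eval_ctx E20" "Pc E20 E2" "P t0 t"
      unfolding LE_def by blast
    have ev1: "eval_ctx (comp Au0 (CAppR (plug A0 (Lam (need_body Ad0 E10))) Hole))"
      using eval_need_ctx[OF rel(1,2,3) ev_need.hyps(1,2,3,6) rel(5) eval_ctx.ev_hole] .
    have ev2: "eval_ctx (comp Au0 (CAppR (plug A0 (Lam (need_body Ad0 E10))) E20))"
      using eval_need_ctx[OF rel(1,2,3) ev_need.hyps(1,2,3,6) rel(5) g1(2)] .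
    have "stds e (plug (comp Au0 (CAppR (plug A0 (Lam (need_body Ad0 E10))) E20)) t0)"
      using e1 stds_ctx[OF g1(1) ev1] by simp
    moreover have "Pc (comp Au0 (CAppR (plug A0 (Lam (need_body Ad0 E10))) E20))
       (comp Au (CAppR (plug A (Lam (need_body Ad E1))) E2))"
      using rel g1 by (intro ctxrel_comp ctxrel.cr_appR Pc_plug P.P_lam Pc_need_body) auto
    ultimately show "\<exists>E0 t0. stds e (plug E0 t0) \<and> eval_ctx E0 \<and>
        Pc E0 (comp Au (CAppR (plug A (Lam (need_body Ad E1))) E2)) \<and> P t0 t"
      using ev2 g1(4) by blast
  qed
qed

lemma L_E: "eval_ctx E \<Longrightarrow> P e (plug E t) \<Longrightarrow>
   \<exists>E0 t0. stds e (plug E0 t0) \<and> eval_ctx E0 \<and> Pc E0 E \<and> P t0 t"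
  using L_E_aux unfolding LE_def by blast



lemma R: "P t r \<Longrightarrow> beta_need r r' \<Longrightarrow> \<exists>t2 t3. stds t t2 \<and> beta_need t2 t3 \<and> P t3 r'"
proof -
  assume Pt: "P t r" and br: "beta_need r r'"
  from br show ?thesis
  proof (cases rule: beta_need.cases)
    case (beta_needI Au A1 Ad E A2 v)
    note h = beta_needI(3-9)
    from ND[OF h(1,2,3,6) _ ] Pt[unfolded beta_needI(1)] L_E_aux[OF h(4)]
    obtain Au0 A10 Ad0 E0 g0 where
      e1: "stds t (plug Au0 (App (plug A10 (Lam (need_body Ad0 E0))) g0))"
      and rel: "Pc Au0 Au" "Pc A10 A1" "Pc Ad0 Ad" "Pc E0 E" "eval_ctx E0" and g0: "P g0 (plug A2 v)"
      by blast
    from L_ans[OF h(5) g0] obtain A20 w where g1: "stds g0 (plug A20 w)" "Pc A20 A2" "P w v" by blast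
    from h(7) obtain b where vb: "v = Lam b" unfolding is_value_def by blast
    from P_invLam[OF g1(3) vb] obtain b0 where w1: "beta_need\<^sup>*\<^sup>* w (Lam b0)" "P b0 b" by blast
    have ansA20: "ans A20" using Pc_ans g1(2) h(5) by blast
    let ?F0 = "plug A10 (Lam (need_body Ad0 E0))"
    have ev1: "eval_ctx (comp Au0 (CAppR ?F0 Hole))"
      using eval_need_ctx[OF rel(1,2,3) h(1,2,3,6) rel(5) eval_ctx.ev_hole] .
    have ev2: "eval_ctx (comp Au0 (CAppR ?F0 A20))"
      using eval_need_ctx[OF rel(1,2,3) h(1,2,3,6) rel(5) ans_eval[OF ansA20]] .
    have "stds t (plug Au0 (App ?F0 g0))" using e1 .
    also have "stds (plug Au0 (App ?F0 g0)) (plug Au0 (App ?F0 (plug A20 w)))"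
      using stds_ctx[OF g1(1) ev1] by simp
    also have "stds (plug Au0 (App ?F0 (plug A20 w))) (plug Au0 (App ?F0 (plug A20 (Lam b0))))"
      using stds_ctx[OF betas_stds[OF w1(1)] ev2] by simp
    finally have t2: "stds t (plug Au0 (App ?F0 (plug A20 (Lam b0))))" .
    have bn: "beta_need (plug Au0 (App ?F0 (plug A20 (Lam b0))))
       (plug Au0 (plug A10 (plug (cliftn (binders A10) A20 0)
          (subst (liftn (binders A20) (need_body Ad0 E0) 1)
                 (liftn (binders A10) (Lam b0) (binders A20)) 0))))"
    proof (rule beta_need.beta_needI)
      show "outer Au0" using Pc_outer rel h by blast
      show "ans A10" using Pc_ans rel h by blast
      show "inner Ad0" using Pc_inner rel h by blast
      show "ans (comp Au0 Ad0)" using Pc_ans[OF ctxrel_comp[OF rel(1,3)] h(6)] .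
      show "is_value (Lam b0)" by (simp add: is_value_def)
    qed (use rel ansA20 in auto)
    have b1: "binders A10 = binders A1" "binders A20 = binders A2"
      using rel g1 ctxrel_binders by metis+
    have "P (plug Au0 (plug A10 (plug (cliftn (binders A10) A20 0)
          (subst (liftn (binders A20) (need_body Ad0 E0) 1)
                 (liftn (binders A10) (Lam b0) (binders A20)) 0)))) r'"
      unfolding beta_needI(2) b1 vb
      by (intro Pc_plug Pc_cliftn P_subst P_liftn Pc_need_body P.P_lam rel g1 w1)
    then show ?thesis using t2 bn by blast
  qed
qed

lemma K: "P e e' \<Longrightarrow> std_step e' e1 \<Longrightarrow> \<exists>e2. stds e e2 \<and> P e2 e1"
proof -
  assume Pe: "P e e'" and st: "std_step e' e1"
  from st obtain E r r' where eq: "e' = plug E r" "e1 = plug E r'" "eval_ctx E" "beta_need r r'"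
    by (cases rule: std_step.cases) auto
  from L_E[OF eq(3)] Pe eq(1) obtain E0 t0 where a: "stds e (plug E0 t0)" "eval_ctx E0" "Pc E0 E" "P t0 r"
    by blast
  from R[OF a(4) eq(4)] obtain t2 t3 where b: "stds t0 t2" "beta_need t2 t3" "P t3 r'" by blast
  have "stds e (plug E0 t2)" using a(1) stds_ctx[OF b(1) a(2)] by simp
  moreover have "std_step (plug E0 t2) (plug E0 t3)" using std_step.std_stepI[OF a(2) b(2)] .
  ultimately have "stds e (plug E0 t3)" by (rule rtranclp.rtrancl_into_rtrancl)
  moreover have "P (plug E0 t3) e1" using eq(2) Pc_plug[OF a(3) b(3)] by simp
  ultimately show ?thesis by blast
qed

inductive S :: "dB \<Rightarrow> dB \<Rightarrow> bool" where
  S_var: "S (Var x) (Var x)"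
| S_lam: "S a b \<Longrightarrow> S (Lam a) (Lam b)"
| S_app: "S a a' \<Longrightarrow> S b b' \<Longrightarrow> S (App a b) (App a' b')"
| S_step: "std_step e e1 \<Longrightarrow> S e1 e' \<Longrightarrow> S e e'"

lemma S_refl: "S t t"
  by (induction t) (simp_all add: S_var S_lam S_app)

lemma stds_S: "stds e e1 \<Longrightarrow> S e1 e' \<Longrightarrow> S e e'"
  by (induction rule: converse_rtranclp_induct) (auto intro: S_step)

lemma main: "S e' e'' \<Longrightarrow> P e e' \<Longrightarrow> S e e''"
proof (induction arbitrary: e rule: S.induct)
  case (S_var x)
  then show ?case using stds_S[OF betas_stds[OF P_invVar[OF S_var refl]]] S.S_var by blast
next
  case (S_lam a b)
  from P_invLam[OF S_lam.prems refl] obtain a0 where "beta_need\<^sup>*\<^sup>* e (Lam a0)" "P a0 a" by blast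
  then show ?case using S_lam.IH stds_S betas_stds S.S_lam by blast
next
  case (S_app a a' b b')
  from P_invApp[OF S_app.prems refl] obtain a0 b0 where
    "beta_need\<^sup>*\<^sup>* e (App a0 b0)" "P a0 a" "P b0 b" by blast
  then show ?case using S_app.IH stds_S betas_stds S.S_app by blast
next
  case (S_step e1 e2 e')
  from K[OF S_step.prems S_step.hyps(1)] obtain e3 where "stds e e3" "P e3 e2" by blast
  then show ?case using S_step.IH stds_S by blast
qed

lemma red_star_S: "red_star e e' \<Longrightarrow> S e e'"
proof (induction rule: converse_rtranclp_induct)
  case base
  then show ?case by (rule S_refl)
next
  case (step y z)
  then show ?case using main red_P by blast
qed

lemma std_seqs_nonempty: "es \<in> std_seqs \<Longrightarrow> es \<noteq> []"
  by (induction rule: std_seqs.induct) auto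

lemma S_seq: "S e e' \<Longrightarrow> \<exists>es. es \<in> std_seqs \<and> hd es = e \<and> last es = e'"
proof (induction rule: S.induct)
  case (S_var x)
  then show ?case using std_seqs.sr_var by force
next
  case (S_lam a b)
  then obtain es where "es \<in> std_seqs" "hd es = a" "last es = b" by blast
  moreover have "es \<noteq> []" using calculation std_seqs_nonempty by blast
  ultimately show ?case using std_seqs.sr_lam[of es]
    by (intro exI[of _ "map Lam es"]) (simp add: hd_map last_map)
next
  case (S_app a a' b b')
  then obtain es fs where es: "es \<in> std_seqs" "hd es = a" "last es = a'"
    and fs: "fs \<in> std_seqs" "hd fs = b" "last fs = b'" by blast
  have ne: "es \<noteq> []" "fs \<noteq> []" using es fs std_seqs_nonempty by blast+
  let ?l = "map (\<lambda>e. App e (hd fs)) es @ map (App (last es)) (tl fs)"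
  have "?l \<in> std_seqs" using std_seqs.sr_app[OF es(1) fs(1)] .
  moreover have "hd ?l = App a b" using ne es fs by (simp add: hd_map)
  moreover have "last ?l = App a' b'"
  proof (cases "tl fs = []")
    case True
    then have "last fs = hd fs" using ne by (metis last_ConsL list.exhaust_sel)
    then show ?thesis using True ne es fs by (simp add: last_map)
  next
    case False
    then have "last (tl fs) = last fs" using ne by (metis last_tl)
    then show ?thesis using False ne es fs by (simp add: last_map)
  qed
  ultimately show ?case by blast
next
  case (S_step e e1 e')
  then obtain es where "es \<in> std_seqs" "hd es = e1" "last es = e'" by blast
  moreover have "es \<noteq> []" using calculation std_seqs_nonempty by blast
  ultimately show ?case using std_seqs.sr_step[of e es] S_step.hyps(1)
    by (intro exI[of _ "e # es"]) auto
qed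

lemma red_plug: "red e e' \<Longrightarrow> red (plug C e) (plug C e')"
  by (induction C) (auto intro: red.intros)

lemma std_red: "std_step e e' \<Longrightarrow> red e e'"
  by (induction rule: std_step.induct) (auto intro: red_plug red.red_beta)

lemma red_star_lam: "red_star a b \<Longrightarrow> red_star (Lam a) (Lam b)"
  by (induction rule: rtranclp_induct) (auto intro: rtranclp.rtrancl_into_rtrancl red.red_lam)

lemma red_star_appL: "red_star a b \<Longrightarrow> red_star (App a c) (App b c)"
  by (induction rule: rtranclp_induct) (auto intro: rtranclp.rtrancl_into_rtrancl red.red_appL)

lemma red_star_appR: "red_star a b \<Longrightarrow> red_star (App c a) (App c b)"
  by (induction rule: rtranclp_induct) (auto intro: rtranclp.rtrancl_into_rtrancl red.red_appR)

lemma seq_red: "es \<in> std_seqs \<Longrightarrow> red_star (hd es) (last es)"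
proof (induction rule: std_seqs.induct)
  case (sr_var x)
  then show ?case by simp
next
  case (sr_lam es)
  then show ?case using std_seqs_nonempty[OF sr_lam.hyps] red_star_lam by (simp add: hd_map last_map)
next
  case (sr_step e0 es)
  then show ?case using std_seqs_nonempty[OF sr_step.hyps(2)] std_red
    by (metis converse_rtranclp_into_rtranclp list.sel(1) last_ConsR)
next
  case (sr_app es fs)
  have ne: "es \<noteq> []" "fs \<noteq> []" using sr_app.hyps std_seqs_nonempty by blast+
  let ?l = "map (\<lambda>e. App e (hd fs)) es @ map (App (last es)) (tl fs)"
  have "hd ?l = App (hd es) (hd fs)" using ne by (simp add: hd_map)
  moreover have "last ?l = App (last es) (last fs)"
  proof (cases "tl fs = []")
    case True
    then have "last fs = hd fs" using ne by (metis last_ConsL list.exhaust_sel)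
    then show ?thesis using True ne by (simp add: last_map)
  next
    case False
    then have "last (tl fs) = last fs" using ne by (metis last_tl)
    then show ?thesis using False ne by (simp add: last_map)
  qed
  moreover have "red_star (App (hd es) (hd fs)) (App (last es) (last fs))"
    using red_star_appL[OF sr_app.IH(1)] red_star_appR[OF sr_app.IH(2)] by (rule rtranclp_trans)
  ultimately show ?case by simp
qed

theorem lemma3:
  fixes e e' :: dB
  shows "red_star e e' \<longleftrightarrow> (\<exists>es. es \<in> std_seqs \<and> hd es = e \<and> last es = e')"
  using red_star_S S_seq seq_red by blast


end
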